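(* Let $n\ge 1$ and let $\pi$ be a permutation of length $n$ that has a distant inverse-descent. Then $\zeta_n$ contains a subsequence order-isomorphic to $\pi$.
   Context: A permutation of length $n$ is a word containing each letter of $[n]=\{1,\dots,n\}$ exactly once. Two words $u,v$ of the same length $k$ over the positive integers are order-isomorphic if for all $i,j\in[k]$, $u(i)>u(j)\iff v(i)>v(j)$. A word $w$ contains a subsequence order-isomorphic to $\pi$ if there are indices $i_1<\cdots<i_n$ with $w(i_1)\cdots w(i_n)$ order-isomorphic to $\pi$. Entries $\pi(j),\pi(k)$ form an inverse-descent if $j<k$ and $\pi(j)=\pi(k)+1$; it is a distant inverse-descent if moreover $k\ge j+2$. The word $z_n$ is the concatenation of $n$ runs $r_1r_2\cdots r_n$, where for odd $k$ the run $r_k$ lists the odd integers in $[n]$ in increasing order and for even $k$ the run $r_k$ lists the even integers in $[n]$ in decreasing order (so $|z_n|=n^2/2$ for even $n$ and $(n^2+1)/2$ for odd $n$). The permutation $\zeta_n$ of length $|z_n|$ is the unique permutation such that for all indices $i\ne j$: $\zeta_n(i)>\zeta_n(j)$ if and only if either $z_n(i)>z_n(j)$, or $z_n(i)=z_n(j)$ and $i<j$. *)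

theory Defs
  imports Main
begin

(* Words are lists of positive integers; positions are 0-indexed in the list. *)

definition is_perm :: "nat list \<Rightarrow> bool" where
  "is_perm p \<longleftrightarrow> distinct p \<and> set p = {1..length p}"

definition order_iso :: "nat list \<Rightarrow> nat list \<Rightarrow> bool" where
  "order_iso u v \<longleftrightarrow> length u = length v \<and>
     (\<forall>i<length u. \<forall>j<length u. u ! i > u ! j \<longleftrightarrow> v ! i > v ! j)"

definition contains :: "nat list \<Rightarrow> nat list \<Rightarrow> bool" where
  "contains w p \<longleftrightarrow> (\<exists>idx :: nat \<Rightarrow> nat.
      (\<forall>a b. a < b \<and> b < length p \<longrightarrow> idx a < idx b) \<and>
      (\<forall>a<length p. idx a < length w) \<and>
      order_iso (map (\<lambda>a. w ! idx a) [0..<length p]) p)"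

definition has_distant_inverse_descent :: "nat list \<Rightarrow> bool" where
  "has_distant_inverse_descent p \<longleftrightarrow>
     (\<exists>j k. j < k \<and> k < length p \<and> p ! j = p ! k + 1 \<and> j + 2 \<le> k)"

definition run :: "nat \<Rightarrow> nat \<Rightarrow> nat list" where
  "run n k = (if odd k then filter odd [1..<n+1] else rev (filter even [1..<n+1]))"

definition z_word :: "nat \<Rightarrow> nat list" where
  "z_word n = concat (map (run n) [1..<n+1])"

(* zeta(i) > zeta(j) iff z(i) > z(j) or (z(i) = z(j) and i < j);
   so zeta(i) = 1 + #{j \<noteq> i below i in this strict total order}. *)
definition zeta :: "nat \<Rightarrow> nat list" where
  "zeta n = (let z = z_word n in
     map (\<lambda>i. Suc (card {j. j < length z \<and> j \<noteq> i \<and>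
                  (z ! j < z ! i \<or> (z ! j = z ! i \<and> i < j))}))
         [0..<length z])"

end

theory Submission imports Defs "HOL-Library.Sublist" begin



lemma emb_idx:
  "list_emb (=) xs ys \<Longrightarrow> \<exists>idx. (\<forall>a b. a < b \<and> b < length xs \<longrightarrow> idx a < idx b) \<and>
     (\<forall>a<length xs. idx a < length ys \<and> ys ! idx a = xs ! a)"
proof (induction rule: list_emb.induct)
  case (list_emb_Nil ys)
  then show ?case by auto
next
  case (list_emb_Cons xs ys y)
  then obtain idx where "\<forall>a b. a < b \<and> b < length xs \<longrightarrow> idx a < idx b"
     "\<forall>a<length xs. idx a < length ys \<and> ys ! idx a = xs ! a" by blast
  then show ?case by (intro exI[of _ "Suc \<circ> idx"]) auto
next
  case (list_emb_Cons2 x y xs ys)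
  then obtain idx where i1: "\<forall>a b. a < b \<and> b < length xs \<longrightarrow> idx a < idx b"
     and i2: "\<forall>a<length xs. idx a < length ys \<and> ys ! idx a = xs ! a" by blast
  define idx' where "idx' a = (case a of 0 \<Rightarrow> 0 | Suc a' \<Rightarrow> Suc (idx a'))" for a
  have "\<forall>a b. a < b \<and> b < length (x#xs) \<longrightarrow> idx' a < idx' b"
  proof (intro allI impI)
    fix a b assume "a < b \<and> b < length (x#xs)"
    then show "idx' a < idx' b" using i1
      by (cases a; cases b) (auto simp: idx'_def)
  qed
  moreover have "\<forall>a<length (x#xs). idx' a < length (y#ys) \<and> (y#ys) ! idx' a = (x#xs) ! a"
  proof (intro allI impI)
    fix a assume "a < length (x#xs)"
    then show "idx' a < length (y#ys) \<and> (y#ys) ! idx' a = (x#xs) ! a" using i2 list_emb_Cons2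
      by (cases a) (auto simp: idx'_def)
  qed
  ultimately show ?case by blast
qed

definition Rz :: "nat list \<Rightarrow> nat \<Rightarrow> nat \<Rightarrow> bool" where
  "Rz z j i \<longleftrightarrow> (z ! j < z ! i \<or> (z ! j = z ! i \<and> i < j))"

lemma card_lt:
  assumes "Rz z j i" "i < length z" "j < length z" "i \<noteq> j"
  shows "card {t. t < length z \<and> t \<noteq> j \<and> Rz z t j} < card {t. t < length z \<and> t \<noteq> i \<and> Rz z t i}"
proof (rule psubset_card_mono)
  show "finite {t. t < length z \<and> t \<noteq> i \<and> Rz z t i}" by auto
  have ni: "\<not> Rz z i j" using assms(1,4) by (auto simp: Rz_def)
  show "{t. t < length z \<and> t \<noteq> j \<and> Rz z t j} \<subset> {t. t < length z \<and> t \<noteq> i \<and> Rz z t i}"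
  proof
    show "{t. t < length z \<and> t \<noteq> j \<and> Rz z t j} \<subseteq> {t. t < length z \<and> t \<noteq> i \<and> Rz z t i}"
      using assms(1) ni by (auto simp: Rz_def)
    show "{t. t < length z \<and> t \<noteq> j \<and> Rz z t j} \<noteq> {t. t < length z \<and> t \<noteq> i \<and> Rz z t i}"
      using assms by auto
  qed
qed

lemma zeta_cmp:
  assumes "i < length (z_word n)" "j < length (z_word n)" "i \<noteq> j"
  shows "length (zeta n) = length (z_word n)"
    and "zeta n ! i > zeta n ! j \<longleftrightarrow> (z_word n ! i > z_word n ! j \<or> (z_word n ! i = z_word n ! j \<and> i < j))"
proof -
  let ?z = "z_word n"
  have zi: "zeta n ! t = Suc (card {s. s < length ?z \<and> s \<noteq> t \<and> Rz ?z s t})" if "t < length ?z" for t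
    using that unfolding zeta_def Let_def Rz_def by simp
  show "length (zeta n) = length (z_word n)" unfolding zeta_def Let_def by simp
  have tot: "Rz ?z j i \<or> Rz ?z i j" using assms(3) by (auto simp: Rz_def)
  show "zeta n ! i > zeta n ! j \<longleftrightarrow> (?z ! i > ?z ! j \<or> (?z ! i = ?z ! j \<and> i < j))"
  proof
    assume "zeta n ! i > zeta n ! j"
    then have "\<not> Rz ?z i j" using card_lt[of ?z i j] assms zi by fastforce
    then show "?z ! i > ?z ! j \<or> (?z ! i = ?z ! j \<and> i < j)" using tot by (auto simp: Rz_def)
  next
    assume "?z ! i > ?z ! j \<or> (?z ! i = ?z ! j \<and> i < j)"
    then have "Rz ?z j i" by (auto simp: Rz_def)
    then show "zeta n ! i > zeta n ! j" using card_lt[of ?z j i] assms zi by fastforce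
  qed
qed




definition step :: "nat \<Rightarrow> nat \<Rightarrow> nat" where
  "step x y = (if odd x \<noteq> odd y then 1 else if (odd x \<and> x < y) \<or> (even x \<and> y < x) then 0 else 2)"

fun S :: "nat list \<Rightarrow> nat" where
  "S (x # y # c) = step x y + S (y # c)"
| "S _ = 0"

lemma upt_split: "i \<le> j \<Longrightarrow> j \<le> k \<Longrightarrow> [i..<k] = [i..<j] @ [j..<k]"
  using upt_add_eq_append[of i j "k - j"] by simp

definition suf :: "nat \<Rightarrow> nat \<Rightarrow> nat \<Rightarrow> nat list" where
  "suf n r x = (if odd r then filter odd [x..<n+1] else rev (filter even [1..<x+1]))"

lemma suf_cons:
  assumes "1 \<le> x" "x \<le> n" "odd r \<longleftrightarrow> odd x"
  shows "\<exists>t. suf n r x = x # t"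
proof (cases "odd r")
  case True
  have "[x..<n+1] = x # [Suc x..<n+1]" by (rule upt_conv_Cons) (use assms in simp)
  then have "suf n r x = x # filter odd [Suc x..<n+1]" using True assms by (simp del: upt_Suc add: suf_def)
  then show ?thesis by blast
next
  case False
  have "[1..<x+1] = [1..<x] @ [x]" using assms by simp
  then have "suf n r x = x # rev (filter even [1..<x])" using False assms by (simp add: suf_def)
  then show ?thesis by blast
qed

lemma suf_same:
  assumes "1 \<le> x" "x \<le> n" "1 \<le> y" "y \<le> n" "odd r \<longleftrightarrow> odd x" "odd x \<longleftrightarrow> odd y"
    "step x y = 0"
  shows "\<exists>t. suf n r x = x # t @ suf n r y"
proof (cases "odd r")
  case True
  then have "x < y" "odd x" using assms by (auto simp: step_def split: if_splits)
  have "[x..<n+1] = [x..<y] @ [y..<n+1]" using \<open>x<y\<close> assms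
    by (intro upt_split) auto
  moreover have "[x..<y] = x # [Suc x..<y]" using \<open>x<y\<close> by (simp add: upt_conv_Cons)
  ultimately show ?thesis using True \<open>odd x\<close> by (simp add: suf_def)
next
  case False
  then have "y < x" "even x" using assms by (auto simp: step_def split: if_splits)
  have "[1..<x+1] = [1..<y+1] @ [y+1..<x] @ [x]" using \<open>y<x\<close> assms
    using upt_split[of 1 "y+1" x] by simp
  then show ?thesis using False \<open>even x\<close> by (simp add: suf_def)
qed

lemma run_split:
  assumes "1 \<le> y" "y \<le> n" "odd r \<longleftrightarrow> odd y"
  shows "\<exists>pre. run n r = pre @ suf n r y"
proof (cases "odd r")
  case True
  have "[1..<n+1] = [1..<y] @ [y..<n+1]" using assms
    by (intro upt_split) auto
  then show ?thesis using True by (simp add: suf_def run_def)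
next
  case False
  have "[1..<n+1] = [1..<y+1] @ [y+1..<n+1]" using assms
    by (intro upt_split) auto
  then show ?thesis using False by (simp add: suf_def run_def)
qed

lemma concat_split:
  assumes "r < r'" "r' \<le> n"
  shows "concat (map (run n) [r..<n+1]) =
     concat (map (run n) [r..<r']) @ run n r' @ concat (map (run n) [r'+1..<n+1])"
proof -
  have "[r..<n+1] = [r..<r'] @ [r'..<n+1]" using assms
    by (intro upt_split) auto
  moreover have "[r'..<n+1] = r' # [r'+1..<n+1]" using assms by (simp add: upt_conv_Cons)
  ultimately show ?thesis by simp
qed

lemma emb_main:
  assumes "1 \<le> x" "x \<le> n" "\<forall>y\<in>set c. 1 \<le> y \<and> y \<le> n" "odd r \<longleftrightarrow> odd x" "r + S (x # c) \<le> n"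
  shows "subseq (x # c) (suf n r x @ concat (map (run n) [r+1..<n+1]))"
  using assms
proof (induction c arbitrary: x r)
  case Nil
  then obtain t where "suf n r x = x # t" using suf_cons by blast
  then show ?case by simp
next
  case (Cons y c)
  have y: "1 \<le> y" "y \<le> n" "\<forall>y\<in>set c. 1 \<le> y \<and> y \<le> n" using Cons.prems by auto
  obtain t where t: "suf n r x = x # t" using suf_cons Cons.prems by blast
  show ?case
  proof (cases "step x y = 0")
    case True
    then have par: "odd x \<longleftrightarrow> odd y" by (cases "odd x"; cases "odd y") (auto simp: step_def)
    obtain u where u: "suf n r x = x # u @ suf n r y"
      using suf_same[OF Cons.prems(1,2) y(1,2) Cons.prems(4) par True] by blast
    have "subseq (y # c) (suf n r y @ concat (map (run n) [r+1..<n+1]))"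
      using Cons.IH[OF y Cons.prems(4)[unfolded par]] Cons.prems(5) True by simp
    then show ?thesis unfolding u by auto
  next
    case False
    define r' where "r' = r + step x y"
    have st: "step x y = 1 \<or> step x y = 2" using False unfolding step_def by presburger
    have par: "odd r' \<longleftrightarrow> odd y" using st Cons.prems(4) unfolding r'_def
      by (auto simp: step_def split: if_splits)
    have rr: "r + 1 \<le> r'" "r' + S (y # c) \<le> n" using False Cons.prems(5) by (auto simp: r'_def)
    have rn: "r' \<le> n" using rr by simp
    have IH: "subseq (y # c) (suf n r' y @ concat (map (run n) [r'+1..<n+1]))"
      using Cons.IH[OF y par rr(2)] .
    obtain pre where pre: "run n r' = pre @ suf n r' y" using run_split[OF y(1,2) par] by blast
    have "concat (map (run n) [r+1..<n+1]) =
       concat (map (run n) [r+1..<r']) @ pre @ suf n r' y @ concat (map (run n) [r'+1..<n+1])"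
    proof (cases "r + 1 = r'")
      case True
      then have "[r+1..<n+1] = r' # [r'+1..<n+1]" using rn upt_conv_Cons[of r' "n+1"] by simp
      then show ?thesis using True pre by (simp del: upt_Suc)
    next
      case False
      then show ?thesis using concat_split[of "r+1" r' n] rr rn pre by simp
    qed
    moreover have "subseq (y # c) ((t @ concat (map (run n) [r+1..<r']) @ pre) @
        (suf n r' y @ concat (map (run n) [r'+1..<n+1])))"
      by (rule list_emb_append2[OF IH])
    ultimately show ?thesis unfolding t by (simp del: upt_Suc)
  qed
qed




lemma z_emb:
  assumes "1 \<le> x" "x \<le> n" "\<forall>y\<in>set c. 1 \<le> y \<and> y \<le> n"
    "(if odd x then 1 else 2) + S (x # c) \<le> n"
  shows "subseq (x # c) (z_word n)"
proof -
  define r0 where "r0 = (if odd x then 1 else (2::nat))"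
  have par: "odd r0 \<longleftrightarrow> odd x" by (simp add: r0_def)
  have le: "r0 + S (x # c) \<le> n" using assms(4) by (simp add: r0_def)
  have E: "subseq (x # c) (suf n r0 x @ concat (map (run n) [r0+1..<n+1]))"
    using emb_main[OF assms(1-3) par le] .
  obtain pre where pre: "run n r0 = pre @ suf n r0 x" using run_split[OF assms(1,2) par] by blast
  have "\<exists>A. z_word n = A @ run n r0 @ concat (map (run n) [r0+1..<n+1])"
  proof (cases "odd x")
    case True
    then have "r0 = 1" by (simp add: r0_def)
    moreover have "[1..<n+1] = 1 # [2..<n+1]" using assms upt_conv_Cons[of 1 "n+1"] by (simp del: upt_Suc add: numeral_2_eq_2)
    ultimately show ?thesis unfolding z_word_def by (intro exI[of _ "[]"]) (simp del: upt_Suc add: numeral_2_eq_2)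
  next
    case False
    then have "r0 = 2" by (simp add: r0_def)
    moreover have "2 \<le> n" using le \<open>r0 = 2\<close> by simp
    ultimately show ?thesis unfolding z_word_def using concat_split[of 1 2 n] by (intro exI) simp
  qed
  then obtain A where "z_word n = A @ run n r0 @ concat (map (run n) [r0+1..<n+1])" by blast
  then have "z_word n = (A @ pre) @ (suf n r0 x @ concat (map (run n) [r0+1..<n+1]))"
    using pre by simp
  then show ?thesis using E by (metis list_emb_append2)
qed

fun adj_ne :: "nat list \<Rightarrow> bool" where
  "adj_ne (x # y # c) = (x \<noteq> y \<and> adj_ne (y # c))"
| "adj_ne _ = True"

lemma adj_ne_nth: "(\<forall>i. Suc i < length xs \<longrightarrow> xs ! i \<noteq> xs ! Suc i) \<Longrightarrow> adj_ne xs"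
proof (induction xs rule: adj_ne.induct)
  case (1 x y c)
  have "\<forall>i. Suc i < length (y # c) \<longrightarrow> (y # c) ! i \<noteq> (y # c) ! Suc i"
  proof (intro allI impI)
    fix i assume "Suc i < length (y # c)"
    then show "(y # c) ! i \<noteq> (y # c) ! Suc i" using "1.prems"[rule_format, of "Suc i"] by simp
  qed
  then show ?case using 1 by fastforce
qed auto

lemma step_compl: "x \<noteq> y \<Longrightarrow> step x y + step (Suc x) (Suc y) = 2"
  unfolding step_def by auto

lemma S_compl: "adj_ne c \<Longrightarrow> S c + S (map Suc c) = 2 * (length c - 1)"
proof (induction c rule: S.induct)
  case (1 x y c)
  then have "S (y # c) + S (map Suc (y # c)) = 2 * (length (y # c) - 1)" by simp
  moreover have "step x y + step (Suc x) (Suc y) = 2" using 1 step_compl by simp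
  ultimately show ?case by simp
qed auto




lemma contains_from:
  fixes h f :: "nat \<Rightarrow> nat"
  assumes hm: "strict_mono h"
    and sub: "subseq (map (h \<circ> f) p) (z_word n)"
    and key: "\<And>a b. a < length p \<Longrightarrow> b < length p \<Longrightarrow> a \<noteq> b \<Longrightarrow>
        (f (p!a) > f (p!b) \<or> (f (p!a) = f (p!b) \<and> a < b)) \<longleftrightarrow> p!a > p!b"
  shows "contains (zeta n) p"
proof -
  let ?l = "map (h \<circ> f) p"
  obtain idx where i1: "\<forall>a b. a < b \<and> b < length ?l \<longrightarrow> idx a < idx b"
    and i2: "\<forall>a<length ?l. idx a < length (z_word n) \<and> z_word n ! idx a = ?l ! a"
    using emb_idx[OF sub] by blast
  have len: "length (zeta n) = length (z_word n)" unfolding zeta_def Let_def by simp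
  have mono: "a < b \<Longrightarrow> b < length p \<Longrightarrow> idx a < idx b" for a b using i1 by simp
  have "order_iso (map (\<lambda>a. zeta n ! idx a) [0..<length p]) p"
    unfolding order_iso_def
  proof (intro conjI allI impI)
    show "length (map (\<lambda>a. zeta n ! idx a) [0..<length p]) = length p" by simp
    fix a b assume a: "a < length (map (\<lambda>a. zeta n ! idx a) [0..<length p])"
      and b: "b < length (map (\<lambda>a. zeta n ! idx a) [0..<length p])"
    then have a': "a < length p" and b': "b < length p" by auto
    show "(map (\<lambda>a. zeta n ! idx a) [0..<length p] ! a > map (\<lambda>a. zeta n ! idx a) [0..<length p] ! b)
          \<longleftrightarrow> (p ! a > p ! b)"
    proof (cases "a = b")
      case True then show ?thesis by simp
    next
      case False
      have ne: "idx a \<noteq> idx b" using mono a' b' False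
        by (metis less_irrefl nat_neq_iff)
      have lt: "idx a < idx b \<longleftrightarrow> a < b" using mono a' b' False
        by (metis less_asym nat_neq_iff)
      have za: "z_word n ! idx a = h (f (p ! a))" and zb: "z_word n ! idx b = h (f (p ! b))"
        using i2 a' b' by auto
      have ia: "idx a < length (z_word n)" and ib: "idx b < length (z_word n)" using i2 a' b' by auto
      have "(zeta n ! idx a > zeta n ! idx b) \<longleftrightarrow>
          (h (f (p ! a)) > h (f (p ! b)) \<or> (h (f (p ! a)) = h (f (p ! b)) \<and> idx a < idx b))"
        using zeta_cmp(2)[OF ia ib ne] za zb by simp
      also have "\<dots> \<longleftrightarrow> (f (p ! a) > f (p ! b) \<or> (f (p ! a) = f (p ! b) \<and> a < b))"
        using hm lt by (simp add: strict_mono_less strict_mono_eq)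
      also have "\<dots> \<longleftrightarrow> p ! a > p ! b" using key[OF a' b' False] .
      finally show ?thesis using a' b' by simp
    qed
  qed
  moreover have "\<forall>a<length p. idx a < length (zeta n)" using i2 len by simp
  ultimately show ?thesis unfolding contains_def using mono by blast
qed




theorem proposition6p1:
  fixes n :: nat and p :: "nat list"
  assumes "n \<ge> 1" and "is_perm p" and "length p = n"
    and "has_distant_inverse_descent p"
  shows "contains (zeta n) p"
proof -
  obtain j k where jk: "j < k" "k < length p" "p ! j = p ! k + 1" "j + 2 \<le> k"
    using assms(4) unfolding has_distant_inverse_descent_def by blast
  have dist: "distinct p" and sp: "set p = {1..n}" using assms(2,3) unfolding is_perm_def by auto
  define m where "m = p ! k"
  have pj: "p ! j = m + 1" using jk m_def by simp
  have inr: "\<And>i. i < n \<Longrightarrow> 1 \<le> p ! i \<and> p ! i \<le> n"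
    using sp assms(3) nth_mem by (metis atLeastAtMost_iff)
  have mn: "m + 1 \<le> n" using inr[of j] jk pj assms(3) by simp
  have m1: "1 \<le> m" using inr[of k] jk m_def assms(3) by simp
  define f where "f v = (if v \<le> m then v else v - 1)" for v
  have inj: "p ! a = p ! b \<Longrightarrow> a < n \<Longrightarrow> b < n \<Longrightarrow> a = b" for a b
    using dist assms(3) by (simp add: nth_eq_iff_index_eq)
  have feq: "f v = f w \<Longrightarrow> v < w \<Longrightarrow> v = m \<and> w = m + 1" for v w
    unfolding f_def by (auto split: if_splits)
  have key: "(f (p!a) > f (p!b) \<or> (f (p!a) = f (p!b) \<and> a < b)) \<longleftrightarrow> p!a > p!b"
    if ab: "a < length p" "b < length p" "a \<noteq> b" for a b
  proof -
    have ne: "p ! a \<noteq> p ! b" using inj ab assms(3) by auto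
    have fm: "v \<le> w \<Longrightarrow> f v \<le> f w" for v w unfolding f_def by auto
    show ?thesis
    proof
      assume "f (p!a) > f (p!b) \<or> (f (p!a) = f (p!b) \<and> a < b)"
      then show "p!a > p!b"
      proof
        assume "f (p!a) > f (p!b)" then show ?thesis using fm by (meson not_le)
      next
        assume h: "f (p!a) = f (p!b) \<and> a < b"
        show ?thesis
        proof (rule ccontr)
          assume "\<not> p!a > p!b"
          then have "p!a < p!b" using ne by simp
          then have "p!a = m" "p!b = m+1" using feq h by auto
          then have "a = k" "b = j" using inj ab jk assms(3) m_def pj by auto
          then show False using h jk by simp
        qed
      qed
    next
      assume h: "p!a > p!b"
      show "f (p!a) > f (p!b) \<or> (f (p!a) = f (p!b) \<and> a < b)"
      proof (cases "f (p!a) = f (p!b)")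
        case True
        then have "p!b = m" "p!a = m+1" using feq[OF True[symmetric] h] by auto
        then have "b = k" "a = j" using inj ab jk assms(3) m_def pj by auto
        then show ?thesis using True jk by simp
      next
        case False then show ?thesis using fm[of "p!b" "p!a"] h by simp
      qed
    qed
  qed
  define c where "c = map f p"
  have lc: "length c = n" using assms(3) c_def by simp
  have crange: "\<forall>y\<in>set c. 1 \<le> y \<and> y + 1 \<le> n"
  proof
    fix y assume "y \<in> set c"
    then obtain i where i: "i < n" "y = f (p ! i)" using c_def assms(3) by (auto simp: in_set_conv_nth)
    show "1 \<le> y \<and> y + 1 \<le> n" using inr[OF i(1)] i(2) m1 mn unfolding f_def by auto
  qed
  have adj: "adj_ne c"
  proof (rule adj_ne_nth, intro allI impI)
    fix i assume i: "Suc i < length c"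
    show "c ! i \<noteq> c ! Suc i"
    proof
      assume eq: "c ! i = c ! Suc i"
      then have eq': "f (p ! i) = f (p ! Suc i)" using i c_def by simp
      have ne: "p ! i \<noteq> p ! Suc i" using inj[of i "Suc i"] i lc by auto
      have "{i, Suc i} = {j, k}"
      proof (cases "p ! i < p ! Suc i")
        case True
        then have "p ! i = m" "p ! Suc i = m + 1" using feq[OF eq'] by auto
        then have "i = k" "Suc i = j" using inj i lc jk assms(3) m_def pj by auto
        then show ?thesis by auto
      next
        case False
        then have "p ! Suc i < p ! i" using ne by simp
        then have "p ! Suc i = m" "p ! i = m + 1" using feq[OF eq'[symmetric]] by auto
        then have "Suc i = k" "i = j" using inj i lc jk assms(3) m_def pj by auto
        then show ?thesis by auto
      qed
      then show False using jk by (auto simp: doubleton_eq_iff)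
    qed
  qed
  have n3: "n \<ge> 3" using jk assms(3) by simp
  obtain x rest where cx: "c = x # rest" using lc n3 by (cases c) auto
  have Sc: "S c + S (map Suc c) = 2 * (n - 1)" using S_compl[OF adj] lc by simp
  define cost where "cost l = (if odd (hd l) then 1 else (2::nat)) + S l" for l
  have "cost c + cost (map Suc c) = 2 * n + 1"
    using Sc n3 unfolding cost_def cx by (auto)
  then have "cost c \<le> n \<or> cost (map Suc c) \<le> n" by linarith
  then show ?thesis
  proof
    assume h: "cost c \<le> n"
    have x: "1 \<le> x" "x \<le> n" "\<forall>y\<in>set rest. 1 \<le> y \<and> y \<le> n" using crange cx by auto
    have "subseq c (z_word n)" using z_emb[OF x] h unfolding cost_def cx by simp
    then have "subseq (map (id \<circ> f) p) (z_word n)" using c_def by simp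
    then show ?thesis using contains_from[of id f p n] key by (simp add: strict_mono_def)
  next
    assume h: "cost (map Suc c) \<le> n"
    have x: "1 \<le> Suc x" "Suc x \<le> n" "\<forall>y\<in>set (map Suc rest). 1 \<le> y \<and> y \<le> n" using crange cx by auto
    have "subseq (Suc x # map Suc rest) (z_word n)" using z_emb[OF x] h unfolding cost_def cx by simp
    moreover have "map (Suc \<circ> f) p = Suc x # map Suc rest"
      using c_def cx by (metis list.simps(9) map_map)
    ultimately have "subseq (map (Suc \<circ> f) p) (z_word n)" by simp
    then show ?thesis using contains_from[of Suc f p n] key by (simp add: strict_mono_def)
  qed
qed


end
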